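(* Let $R$ be a number ring, $I$ a non-zero ideal of $R$ and $\mathfrak p$ a maximal ideal of $R$. Then $N(\mathfrak p I)\geq N(I)N(\mathfrak p)$.
   Context: A number ring is a subring of a number field (a finite extension of $\mathbb{Q}$). For a non-zero ideal $I$ of $R$, $N(I)=[R:I]$ is its (finite) index as an additive subgroup. *)

theory Defs
  imports Complex_Main
begin

text \<open>Number fields and number rings are realised inside the complex numbers
  (every number field embeds into the complex numbers).\<close>

definition subring_C :: "complex set \<Rightarrow> bool" where
  "subring_C R \<longleftrightarrow> 1 \<in> R \<and> (\<forall>x\<in>R. \<forall>y\<in>R. x + y \<in> R \<and> x - y \<in> R \<and> x * y \<in> R)"

definition number_field :: "complex set \<Rightarrow> bool" where
  "number_field K \<longleftrightarrow> subring_C K \<and> (\<forall>x\<in>K. x \<noteq> 0 \<longrightarrow> inverse x \<in> K) \<and>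
     (\<exists>B. finite B \<and> B \<subseteq> K \<and>
        K = {\<Sum>b\<in>B. of_rat (c b) * b | c. True})"

definition number_ring :: "complex set \<Rightarrow> bool" where
  "number_ring R \<longleftrightarrow> subring_C R \<and> (\<exists>K. number_field K \<and> R \<subseteq> K)"

definition ideal_of :: "complex set \<Rightarrow> complex set \<Rightarrow> bool" where
  "ideal_of I R \<longleftrightarrow> I \<subseteq> R \<and> 0 \<in> I \<and> (\<forall>x\<in>I. \<forall>y\<in>I. x + y \<in> I \<and> x - y \<in> I) \<and>
     (\<forall>r\<in>R. \<forall>x\<in>I. r * x \<in> I)"

definition maximal_ideal_of :: "complex set \<Rightarrow> complex set \<Rightarrow> bool" where
  "maximal_ideal_of P R \<longleftrightarrow> ideal_of P R \<and> P \<noteq> R \<and>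
     (\<forall>J. ideal_of J R \<and> P \<subseteq> J \<longrightarrow> J = P \<or> J = R)"

definition ideal_prod :: "complex set \<Rightarrow> complex set \<Rightarrow> complex set" where
  "ideal_prod P I = {z. \<exists>(n::nat) (f::nat \<Rightarrow> complex) (g::nat \<Rightarrow> complex).
      (\<forall>i<n. f i \<in> P \<and> g i \<in> I) \<and> z = (\<Sum>i<n. f i * g i)}"

definition ideal_norm :: "complex set \<Rightarrow> complex set \<Rightarrow> nat" where
  "ideal_norm R I = card ((\<lambda>x. (\<lambda>y. x + y) ` I) ` R)"

end

theory Submission
  imports Defs "HOL-Library.FuncSet"
begin


interpretation QV: vector_space "\<lambda>(q::rat) (x::complex). of_rat q * x"
  by unfold_locales (auto simp: algebra_simps of_rat_add of_rat_mult)

lemma rat_dep: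
  fixes B :: "complex set" and v :: "nat \<Rightarrow> complex"
  assumes "finite B" "\<forall>i\<le>n. v i \<in> QV.span B" "card B \<le> n"
  shows "\<exists>q::nat\<Rightarrow>rat. (\<Sum>i\<le>n. of_rat (q i) * v i) = 0 \<and> (\<exists>i\<le>n. q i \<noteq> 0)"
proof (cases "inj_on v {..n}")
  case True
  let ?S = "v ` {..n}"
  have cS: "card ?S = Suc n" using True by (simp add: card_image)
  have "\<not> QV.independent ?S"
  proof
    assume "QV.independent ?S"
    then have "card ?S \<le> card B" using QV.independent_span_bound[OF assms(1), of ?S] assms(2) by auto
    then show False using cS assms(3) by simp
  qed
  then obtain u where u: "\<exists>x\<in>?S. u x \<noteq> 0" "(\<Sum>x\<in>?S. of_rat (u x) * x) = 0"
    using QV.dependent_finite[of ?S] by auto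
  have "(\<Sum>i\<le>n. of_rat (u (v i)) * v i) = (\<Sum>x\<in>?S. of_rat (u x) * x)"
    using sum.reindex[OF True, of "\<lambda>x. of_rat (u x) * x"] by simp
  then show ?thesis using u by (intro exI[of _ "\<lambda>i. u (v i)"]) auto
next
  case False
  then obtain i j where ij: "i \<le> n" "j \<le> n" "i \<noteq> j" "v i = v j" unfolding inj_on_def by auto
  define q :: "nat \<Rightarrow> rat" where "q = (\<lambda>t. if t = i then 1 else if t = j then -1 else 0)"
  have "(\<Sum>t\<le>n. of_rat (q t) * v t) = (\<Sum>t\<le>n. (if t = i then v i else 0) - (if t = j then v j else 0))"
    by (rule sum.cong) (auto simp: q_def ij)
  also have "\<dots> = 0" using ij by (simp add: sum_subtractf)
  finally show ?thesis using ij by (intro exI[of _ q]) (auto simp: q_def)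
qed

lemma common_denom:
  fixes q :: "nat \<Rightarrow> rat"
  shows "\<exists>D::int. D > 0 \<and> (\<forall>i\<le>n. of_int D * q i \<in> \<int>)"
proof (induction n)
  case 0
  obtain a b where ab: "quotient_of (q 0) = (a, b)" by (cases "quotient_of (q 0)")
  then have "b > 0" "q 0 = of_int a / of_int b" using quotient_of_denom_pos quotient_of_div by blast+
  then show ?case by (intro exI[of _ b]) auto
next
  case (Suc n)
  then obtain D where D: "D > 0" "\<forall>i\<le>n. of_int D * q i \<in> \<int>" by blast
  obtain a b where ab: "quotient_of (q (Suc n)) = (a, b)" by (cases "quotient_of (q (Suc n))")
  then have b: "b > 0" "q (Suc n) = of_int a / of_int b" using quotient_of_denom_pos quotient_of_div by blast+
  have "\<forall>i\<le>Suc n. of_int (D * b) * q i \<in> \<int>"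
  proof (intro allI impI)
    fix i assume "i \<le> Suc n"
    then consider "i \<le> n" | "i = Suc n" by linarith
    then show "of_int (D * b) * q i \<in> \<int>"
    proof cases
      case 1
      then have "of_int D * q i \<in> \<int>" using D by auto
      then have "of_int b * (of_int D * q i) \<in> \<int>" by (rule Ints_mult[OF Ints_of_int])
      moreover have "of_int (D * b) * q i = of_int b * (of_int D * q i)" by (simp add: mult_ac)
      ultimately show ?thesis by metis
    next
      case 2
      then show ?thesis using b by simp
    qed
  qed
  then show ?case using D b by (intro exI[of _ "D*b"]) auto
qed

lemma int_dep:
  fixes B :: "complex set" and v :: "nat \<Rightarrow> complex"
  assumes "finite B" "\<forall>i\<le>n. v i \<in> QV.span B" "card B \<le> n"
  shows "\<exists>z::nat\<Rightarrow>int. (\<Sum>i\<le>n. of_int (z i) * v i) = 0 \<and> (\<exists>i\<le>n. z i \<noteq> 0)"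
proof -
  obtain q :: "nat \<Rightarrow> rat" where q: "(\<Sum>i\<le>n. of_rat (q i) * v i) = 0" "\<exists>i\<le>n. q i \<noteq> 0"
    using rat_dep[OF assms] by blast
  obtain D :: int where D: "D > 0" "\<forall>i\<le>n. of_int D * q i \<in> \<int>" using common_denom by blast
  define z where "z = (\<lambda>i. \<lfloor>of_int D * q i\<rfloor>)"
  have zi: "of_int (z i) = of_int D * q i" if "i \<le> n" for i
    using D(2) that unfolding z_def by (metis Ints_cases floor_of_int)
  have "(\<Sum>i\<le>n. of_int (z i) * v i) = (\<Sum>i\<le>n. of_int D * (of_rat (q i) * v i))"
  proof (rule sum.cong)
    fix i assume "i \<in> {..n}"
    then have "(of_int (z i) :: complex) = of_rat (of_int (z i))" by simp
    also have "\<dots> = of_rat (of_int D * q i)" using zi \<open>i \<in> {..n}\<close> by simp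
    also have "\<dots> = of_int D * of_rat (q i)" by (simp add: of_rat_mult)
    finally show "of_int (z i) * v i = of_int D * (of_rat (q i) * v i)" by simp
  qed simp
  also have "\<dots> = 0" using q(1) by (simp add: sum_distrib_left[symmetric])
  finally have "(\<Sum>i\<le>n. of_int (z i) * v i) = 0" .
  moreover obtain i where "i \<le> n" "q i \<noteq> 0" using q(2) by blast
  moreover then have "z i \<noteq> 0"
  proof -
    have "(of_int (z i) :: rat) = of_int D * q i" using zi \<open>i \<le> n\<close> .
    then show ?thesis using D(1) \<open>q i \<noteq> 0\<close> by auto
  qed
  ultimately show ?thesis by blast
qed



definition zspan :: "(nat \<Rightarrow> complex) \<Rightarrow> nat \<Rightarrow> complex set" where
  "zspan g k = {\<Sum>i<k. of_int (z i) * g i | z. True}"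

definition int_indep :: "(nat \<Rightarrow> complex) \<Rightarrow> nat \<Rightarrow> bool" where
  "int_indep h m \<longleftrightarrow> (\<forall>z::nat\<Rightarrow>int. (\<Sum>i<m. of_int (z i) * h i) = 0 \<longrightarrow> (\<forall>i<m. z i = 0))"

lemma sum_upd:
  fixes f :: "nat \<Rightarrow> 'a::ab_group_add"
  assumes "finite A" "l \<in> A"
  shows "sum (f(l := v)) A = sum f A - f l + v"
proof -
  have "sum (f(l := v)) A = (f(l := v)) l + sum (f(l := v)) (A - {l})"
    using assms by (simp add: sum.remove)
  also have "sum (f(l := v)) (A - {l}) = sum f (A - {l})" by (rule sum.cong) auto
  also have "sum f (A - {l}) = sum f A - f l" using assms by (simp add: sum_diff1)
  finally show ?thesis by (simp add: algebra_simps)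
qed

lemma zspanI: "x = (\<Sum>i<k. of_int (z i) * g i) \<Longrightarrow> x \<in> zspan g k"
  unfolding zspan_def by blast

lemma zspanE: "x \<in> zspan g k \<Longrightarrow> (\<And>z. x = (\<Sum>i<k. of_int (z i) * g i) \<Longrightarrow> P) \<Longrightarrow> P"
  unfolding zspan_def by blast

lemma zspan_drop:
  assumes "g m = 0"
  shows "zspan g (Suc m) = zspan g m"
  using assms unfolding zspan_def by auto

lemma sum_invol:
  assumes "\<forall>i<k. \<sigma> i < k \<and> \<sigma> (\<sigma> i) = i"
  shows "(\<Sum>i<k. f i) = (\<Sum>i<k. f (\<sigma> i))"
  by (rule sum.reindex_bij_witness[where i=\<sigma> and j=\<sigma>]) (use assms in auto)

lemma zspan_cong:
  assumes "\<forall>i<k. g i = h i"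
  shows "zspan g k = zspan h k"
proof -
  have "(\<Sum>i<k. of_int (z i) * g i) = (\<Sum>i<k. of_int (z i) * h i)" for z
    using assms by (intro sum.cong) auto
  then show ?thesis unfolding zspan_def by auto
qed

lemma zspan_perm:
  assumes "\<forall>i<k. \<sigma> i < k \<and> \<sigma> (\<sigma> i) = i"
  shows "zspan (g \<circ> \<sigma>) k = zspan g k"
proof
  show "zspan g k \<subseteq> zspan (g \<circ> \<sigma>) k"
  proof
    fix x assume "x \<in> zspan g k"
    then obtain z where "x = (\<Sum>i<k. of_int (z i) * g i)" unfolding zspan_def by auto
    also have "\<dots> = (\<Sum>i<k. of_int (z (\<sigma> i)) * (g \<circ> \<sigma>) i)"
      using sum_invol[OF assms, of "\<lambda>i. of_int (z i) * g i"] by simp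
    finally show "x \<in> zspan (g \<circ> \<sigma>) k" by (rule zspanI)
  qed
next
  show "zspan (g \<circ> \<sigma>) k \<subseteq> zspan g k"
  proof
    fix x assume "x \<in> zspan (g \<circ> \<sigma>) k"
    then obtain z where "x = (\<Sum>i<k. of_int (z i) * g (\<sigma> i))" unfolding zspan_def by auto
    also have "\<dots> = (\<Sum>i<k. of_int (z (\<sigma> i)) * g (\<sigma> (\<sigma> i)))"
      using sum_invol[OF assms, of "\<lambda>i. of_int (z i) * g (\<sigma> i)"] by simp
    also have "\<dots> = (\<Sum>i<k. of_int (z (\<sigma> i)) * g i)"
      using assms by (intro sum.cong) auto
    finally show "x \<in> zspan g k" by (rule zspanI)
  qed
qed

lemma zspan_shear:
  assumes "a < k" "b < k" "a \<noteq> b"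
  shows "zspan (g(b := g b + of_int s * g a)) k = zspan g k"
proof
  let ?g' = "g(b := g b + of_int s * g a)"
  show "zspan ?g' k \<subseteq> zspan g k"
  proof
    fix x assume "x \<in> zspan ?g' k"
    then obtain z where x: "x = (\<Sum>i<k. of_int (z i) * ?g' i)" unfolding zspan_def by auto
    define S where "S = (\<Sum>i<k. of_int (z i) * g i)"
    have e1: "(\<lambda>i. of_int (z i) * ?g' i) = (\<lambda>i. of_int (z i) * g i)(b := of_int (z b) * (g b + of_int s * g a))"
      by (rule ext) auto
    have "x = sum ((\<lambda>i. of_int (z i) * g i)(b := of_int (z b) * (g b + of_int s * g a))) {..<k}"
      unfolding x e1 ..
    also have "\<dots> = S - of_int (z b) * g b + of_int (z b) * (g b + of_int s * g a)"
      unfolding S_def by (rule sum_upd) (use assms in auto)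
    finally have xS: "x = S + of_int (z b) * of_int s * g a" by (simp add: algebra_simps)
    have e2: "(\<lambda>i. of_int ((z(a := z a + s * z b)) i) * g i) = (\<lambda>i. of_int (z i) * g i)(a := of_int (z a + s * z b) * g a)"
      by (rule ext) auto
    have "(\<Sum>i<k. of_int ((z(a := z a + s * z b)) i) * g i) = sum ((\<lambda>i. of_int (z i) * g i)(a := of_int (z a + s * z b) * g a)) {..<k}"
      unfolding e2 ..
    also have "\<dots> = S - of_int (z a) * g a + of_int (z a + s * z b) * g a"
      unfolding S_def by (rule sum_upd) (use assms in auto)
    finally have "(\<Sum>i<k. of_int ((z(a := z a + s * z b)) i) * g i) = S + of_int (z b) * of_int s * g a"
      by (simp add: algebra_simps)
    with xS show "x \<in> zspan g k" by (intro zspanI[where z="z(a := z a + s * z b)"]) simp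
  qed
next
  let ?g' = "g(b := g b + of_int s * g a)"
  show "zspan g k \<subseteq> zspan ?g' k"
  proof
    fix x assume "x \<in> zspan g k"
    then obtain z where x: "x = (\<Sum>i<k. of_int (z i) * g i)" unfolding zspan_def by auto
    define F where "F = (\<lambda>i. of_int (z i) * g i)"
    have e3: "(\<lambda>i. of_int ((z(a := z a - s * z b)) i) * ?g' i) =
      (F(a := of_int (z a - s * z b) * g a))(b := of_int (z b) * (g b + of_int s * g a))"
      unfolding F_def by (rule ext) (use assms in auto)
    have "(\<Sum>i<k. of_int ((z(a := z a - s * z b)) i) * ?g' i) =
      sum ((F(a := of_int (z a - s * z b) * g a))(b := of_int (z b) * (g b + of_int s * g a))) {..<k}"
      unfolding e3 ..
    also have "\<dots> = sum (F(a := of_int (z a - s * z b) * g a)) {..<k} - F b + of_int (z b) * (g b + of_int s * g a)"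
      by (subst sum_upd) (use assms in auto)
    also have "\<dots> = sum F {..<k} - F a + of_int (z a - s * z b) * g a - F b + of_int (z b) * (g b + of_int s * g a)"
      by (subst sum_upd) (use assms in auto)
    also have "\<dots> = x" unfolding x F_def by (simp add: algebra_simps)
    finally show "x \<in> zspan ?g' k" by (intro zspanI[where z="z(a := z a - s * z b)"]) simp
  qed
qed

lemma elim_rel:
  assumes "(\<Sum>i<k. of_int (c i) * g i) = 0" "j < k" "c j \<noteq> 0"
  shows "\<exists>g'. zspan g' (k - 1) = zspan g k"
  using assms
proof (induction "\<Sum>i<k. nat \<bar>c i\<bar>" arbitrary: g c j rule: less_induct)
  case less
  show ?case
  proof (cases "\<exists>l<k. l \<noteq> j \<and> c l \<noteq> 0")
    case True
    then obtain l where l: "l < k" "l \<noteq> j" "c l \<noteq> 0" by blast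
    obtain a b where ab: "a < k" "b < k" "a \<noteq> b" "c a \<noteq> 0" "c b \<noteq> 0" "\<bar>c b\<bar> \<le> \<bar>c a\<bar>"
    proof (cases "\<bar>c l\<bar> \<le> \<bar>c j\<bar>")
      case True
      then show ?thesis using that[of j l] l less.prems by auto
    next
      case False
      then show ?thesis using that[of l j] l less.prems by auto
    qed
    define s where "s = sgn (c a) * sgn (c b)"
    define c' where "c' = c(a := c a - s * c b)"
    define g' where "g' = g(b := g b + of_int s * g a)"
    have abs_ca': "\<bar>c a - s * c b\<bar> = \<bar>c a\<bar> - \<bar>c b\<bar>"
      using ab(4,5,6) unfolding s_def by (cases "c a > 0"; cases "c b > 0") auto
    define F where "F = (\<lambda>i. of_int (c i) * g i)"
    have e: "(\<lambda>i. of_int (c' i) * g' i) = (F(a := of_int (c a - s * c b) * g a))(b := of_int (c b) * (g b + of_int s * g a))"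
      unfolding F_def c'_def g'_def by (rule ext) (use ab in auto)
    have "(\<Sum>i<k. of_int (c' i) * g' i) = sum ((F(a := of_int (c a - s * c b) * g a))(b := of_int (c b) * (g b + of_int s * g a))) {..<k}"
      unfolding e ..
    also have "\<dots> = sum (F(a := of_int (c a - s * c b) * g a)) {..<k} - F b + of_int (c b) * (g b + of_int s * g a)"
      by (subst sum_upd) (use ab in auto)
    also have "\<dots> = sum F {..<k} - F a + of_int (c a - s * c b) * g a - F b + of_int (c b) * (g b + of_int s * g a)"
      by (subst sum_upd) (use ab in auto)
    also have "\<dots> = 0" using less.prems(1) unfolding F_def by (simp add: algebra_simps)
    finally have rel: "(\<Sum>i<k. of_int (c' i) * g' i) = 0" .
    have r1: "(\<Sum>i<k. nat \<bar>c' i\<bar>) = nat \<bar>c' a\<bar> + (\<Sum>i\<in>{..<k}-{a}. nat \<bar>c' i\<bar>)"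
      by (rule sum.remove) (use ab in auto)
    have r2: "(\<Sum>i<k. nat \<bar>c i\<bar>) = nat \<bar>c a\<bar> + (\<Sum>i\<in>{..<k}-{a}. nat \<bar>c i\<bar>)"
      by (rule sum.remove) (use ab in auto)
    have r3: "(\<Sum>i\<in>{..<k}-{a}. nat \<bar>c' i\<bar>) = (\<Sum>i\<in>{..<k}-{a}. nat \<bar>c i\<bar>)"
      unfolding c'_def by (rule sum.cong) auto
    have "nat \<bar>c' a\<bar> < nat \<bar>c a\<bar>" unfolding c'_def using abs_ca' ab by simp
    then have lt: "(\<Sum>i<k. nat \<bar>c' i\<bar>) < (\<Sum>i<k. nat \<bar>c i\<bar>)"
      using r1 r2 r3 by linarith
    have "c' b \<noteq> 0" using ab unfolding c'_def by auto
    then obtain g'' where "zspan g'' (k - 1) = zspan g' k"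
      using less.hyps[OF lt rel \<open>b < k\<close>] by blast
    moreover have "zspan g' k = zspan g k" unfolding g'_def by (rule zspan_shear) (use ab in auto)
    ultimately show ?thesis by auto
  next
    case False
    have "(\<Sum>i<k. of_int (c i) * g i) = (\<Sum>i<k. if i = j then of_int (c j) * g j else 0)"
      by (rule sum.cong) (use False in auto)
    also have "\<dots> = of_int (c j) * g j" using less.prems by simp
    finally have gj: "g j = 0" using less.prems by simp
    define \<sigma> where "\<sigma> = (\<lambda>i. if i = j then k - 1 else if i = k - 1 then j else i)"
    have inv: "\<forall>i<k. \<sigma> i < k \<and> \<sigma> (\<sigma> i) = i" unfolding \<sigma>_def using less.prems by auto
    have "zspan (g \<circ> \<sigma>) k = zspan g k" by (rule zspan_perm[OF inv])
    moreover have "(g \<circ> \<sigma>) (k - 1) = 0" using gj unfolding \<sigma>_def by auto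
    then have "zspan (g \<circ> \<sigma>) (Suc (k - 1)) = zspan (g \<circ> \<sigma>) (k - 1)" by (rule zspan_drop)
    moreover have "Suc (k - 1) = k" using less.prems by auto
    ultimately show ?thesis by metis
  qed
qed

lemma reduce_indep:
  "\<exists>h m. m \<le> k \<and> zspan h m = zspan g k \<and> int_indep h m"
proof (induction k arbitrary: g rule: less_induct)
  case (less k)
  show ?case
  proof (cases "int_indep g k")
    case True
    then show ?thesis by blast
  next
    case False
    then obtain c j where "(\<Sum>i<k. of_int (c i) * g i) = 0" "j < k" "c j \<noteq> 0"
      unfolding int_indep_def by blast
    then obtain g' where g': "zspan g' (k - 1) = zspan g k" using elim_rel by blast
    have "k - 1 < k" using \<open>j < k\<close> by auto
    then obtain h m where "m \<le> k - 1" "zspan h m = zspan g' (k - 1)" "int_indep h m"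
      using less.IH by blast
    then show ?thesis using g' by (intro exI[of _ h] exI[of _ m]) auto
  qed
qed



lemma sr_0: "subring_C R \<Longrightarrow> 0 \<in> R"
  unfolding subring_C_def by (metis diff_self)
lemma sr_add: "subring_C R \<Longrightarrow> x \<in> R \<Longrightarrow> y \<in> R \<Longrightarrow> x + y \<in> R"
  unfolding subring_C_def by blast
lemma sr_diff: "subring_C R \<Longrightarrow> x \<in> R \<Longrightarrow> y \<in> R \<Longrightarrow> x - y \<in> R"
  unfolding subring_C_def by blast
lemma sr_mult: "subring_C R \<Longrightarrow> x \<in> R \<Longrightarrow> y \<in> R \<Longrightarrow> x * y \<in> R"
  unfolding subring_C_def by blast
lemma sr_1: "subring_C R \<Longrightarrow> 1 \<in> R"
  unfolding subring_C_def by blast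

lemma sr_of_nat: "subring_C R \<Longrightarrow> of_nat n \<in> R"
  by (induction n) (auto intro: sr_0 sr_add sr_1)
lemma sr_of_int: "subring_C R \<Longrightarrow> of_int z \<in> R"
proof (cases "z \<ge> 0")
  case True
  assume "subring_C R"
  then show ?thesis using True sr_of_nat[of R "nat z"] by simp
next
  case False
  assume R: "subring_C R"
  have "(of_int z :: complex) = 0 - of_nat (nat (-z))" using False by simp
  then show ?thesis using sr_diff[OF R sr_0[OF R] sr_of_nat[OF R]] by simp
qed
lemma sr_sum: "subring_C R \<Longrightarrow> (\<forall>i<(k::nat). f i \<in> R) \<Longrightarrow> (\<Sum>i<k. f i) \<in> R"
  by (induction k) (auto intro: sr_0 sr_add)
lemma sr_pow: "subring_C R \<Longrightarrow> x \<in> R \<Longrightarrow> x ^ n \<in> R"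
  by (induction n) (auto intro: sr_1 sr_mult)

lemma zspan_sub: "subring_C R \<Longrightarrow> (\<forall>i<k. g i \<in> R) \<Longrightarrow> zspan g k \<subseteq> R"
  by (auto elim!: zspanE intro!: sr_sum sr_mult sr_of_int)

lemma zspan_gen: "i < k \<Longrightarrow> g i \<in> zspan g k"
proof -
  assume "i < k"
  have "(\<Sum>t<k. of_int (if t = i then 1 else 0) * g t) = (\<Sum>t<k. if t = i then g i else 0)"
    by (rule sum.cong) auto
  also have "\<dots> = g i" using \<open>i < k\<close> by simp
  finally show ?thesis by (intro zspanI[where z="\<lambda>t. if t = i then 1 else 0"]) simp
qed

lemma claimF:
  fixes a :: nat
  assumes R: "subring_C R" and RB: "R \<subseteq> QV.span B" and B: "finite B"
    and Y: "Y \<subseteq> R" "finite Y" "card Y > a ^ card B" and a: "a > 0"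
  shows "\<exists>y\<in>Y. \<exists>y'\<in>Y. y \<noteq> y' \<and> (\<exists>r\<in>R. y - y' = of_nat a * r)"
proof -
  define k where "k = card Y"
  obtain g where g: "bij_betw g {0..<k} Y" using ex_bij_betw_nat_finite[OF Y(2)] unfolding k_def by blast
  have Ysub: "Y \<subseteq> zspan g k"
  proof
    fix y assume "y \<in> Y"
    then obtain i where "i < k" "y = g i" using g unfolding bij_betw_def by auto
    then show "y \<in> zspan g k" using zspan_gen by simp
  qed
  have gR: "zspan g k \<subseteq> R"
    using g Y(1) by (intro zspan_sub[OF R]) (auto simp: bij_betw_def)
  obtain h m where hm: "m \<le> k" "zspan h m = zspan g k" "int_indep h m" using reduce_indep by blast
  have hR: "zspan h m \<subseteq> R" using hm gR by simp
  have hiR: "h i \<in> R" if "i < m" for i using hR zspan_gen[OF that] by blast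
  have mB: "m \<le> card B"
  proof (rule ccontr)
    assume "\<not> m \<le> card B"
    define n where "n = card B"
    have "\<forall>i\<le>n. h i \<in> QV.span B" using hiR RB \<open>\<not> m \<le> card B\<close> unfolding n_def by force
    then obtain z where z: "(\<Sum>i\<le>n. of_int (z i) * h i) = 0" "\<exists>i\<le>n. z i \<noteq> 0"
      using int_dep[OF B] unfolding n_def by blast
    define z' where "z' = (\<lambda>i. if i \<le> n then z i else 0)"
    have "(\<Sum>i<m. of_int (z' i) * h i) = (\<Sum>i\<le>n. of_int (z' i) * h i)"
      by (rule sum.mono_neutral_right) (use \<open>\<not> m \<le> card B\<close> in \<open>auto simp: n_def z'_def\<close>)
    also have "\<dots> = 0" using z(1) by (simp add: z'_def)
    finally have "\<forall>i<m. z' i = 0" using hm(3) unfolding int_indep_def by blast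
    moreover obtain i where "i \<le> n" "z i \<noteq> 0" using z(2) by blast
    ultimately show False using \<open>\<not> m \<le> card B\<close> unfolding z'_def n_def
      by (metis le_imp_less_Suc less_le_trans not_less_eq_eq)
  qed
  define coef where "coef = (\<lambda>y. SOME z. y = (\<Sum>i<m. of_int (z i) * h i))"
  have coef: "y = (\<Sum>i<m. of_int (coef y i) * h i)" if "y \<in> Y" for y
  proof -
    have "y \<in> zspan h m" using that Ysub hm by auto
    then have "\<exists>z. y = (\<Sum>i<m. of_int (z i) * h i)" by (auto elim: zspanE)
    then show ?thesis unfolding coef_def by (rule someI_ex)
  qed
  define \<phi> where "\<phi> = (\<lambda>y. restrict (\<lambda>i. coef y i mod int a) {..<m})"
  define T where "T = PiE {..<m} (\<lambda>_. {0..<int a})"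
  have cT: "card T = a ^ m" unfolding T_def by (simp add: card_PiE)
  have fT: "finite T" unfolding T_def by (simp add: finite_PiE)
  have img: "\<phi> ` Y \<subseteq> T" unfolding \<phi>_def T_def using a by (auto simp: PiE_def)
  have "a ^ m \<le> a ^ card B" using mB a by (simp add: power_increasing)
  then have "card T < card Y" using cT Y(3) by simp
  then have "\<not> inj_on \<phi> Y" using card_inj_on_le[OF _ img fT] by fastforce
  then obtain y y' where yy: "y \<in> Y" "y' \<in> Y" "y \<noteq> y'" "\<phi> y = \<phi> y'" unfolding inj_on_def by blast
  have md: "coef y i mod int a = coef y' i mod int a" if "i < m" for i
    using fun_cong[OF yy(4), of i] that unfolding \<phi>_def by simp
  define w where "w = (\<lambda>i. (coef y i - coef y' i) div int a)"
  have wi: "coef y i - coef y' i = int a * w i" if "i < m" for i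
    using md[OF that] unfolding w_def by (metis dvd_mult_div_cancel mod_eq_dvd_iff)
  have "y - y' = (\<Sum>i<m. of_int (coef y i - coef y' i) * h i)"
    using coef[OF yy(1)] coef[OF yy(2)] by (simp add: sum_subtractf algebra_simps)
  also have "\<dots> = (\<Sum>i<m. of_nat a * (of_int (w i) * h i))"
    by (rule sum.cong) (auto simp: wi)
  also have "\<dots> = of_nat a * (\<Sum>i<m. of_int (w i) * h i)" by (simp add: sum_distrib_left)
  finally have "y - y' = of_nat a * (\<Sum>i<m. of_int (w i) * h i)" .
  moreover have "(\<Sum>i<m. of_int (w i) * h i) \<in> R" using hR zspanI by blast
  ultimately show ?thesis using yy by blast
qed



lemma id_sub: "ideal_of J R \<Longrightarrow> J \<subseteq> R" unfolding ideal_of_def by blast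
lemma id_0: "ideal_of J R \<Longrightarrow> 0 \<in> J" unfolding ideal_of_def by blast
lemma id_add: "ideal_of J R \<Longrightarrow> x \<in> J \<Longrightarrow> y \<in> J \<Longrightarrow> x + y \<in> J" unfolding ideal_of_def by blast
lemma id_diff: "ideal_of J R \<Longrightarrow> x \<in> J \<Longrightarrow> y \<in> J \<Longrightarrow> x - y \<in> J" unfolding ideal_of_def by blast
lemma id_mult: "ideal_of J R \<Longrightarrow> r \<in> R \<Longrightarrow> x \<in> J \<Longrightarrow> r * x \<in> J" unfolding ideal_of_def by blast
lemma id_mult2: "ideal_of J R \<Longrightarrow> r \<in> R \<Longrightarrow> x \<in> J \<Longrightarrow> x * r \<in> J"
  using id_mult by (metis mult.commute)
lemma id_neg: "ideal_of J R \<Longrightarrow> x \<in> J \<Longrightarrow> - x \<in> J"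
  using id_diff[of J R 0 x] id_0 by simp
lemma id_sum: "ideal_of J R \<Longrightarrow> (\<forall>i<(k::nat). f i \<in> J) \<Longrightarrow> (\<Sum>i<k. f i) \<in> J"
  by (induction k) (auto intro: id_0 id_add)

lemma coset_eq:
  assumes "ideal_of J R"
  shows "((+) x ` J = (+) y ` J) \<longleftrightarrow> x - y \<in> J"
proof
  assume "(+) x ` J = (+) y ` J"
  moreover have "x \<in> (+) x ` J" using id_0[OF assms] by force
  ultimately obtain j where "j \<in> J" "x = y + j" by auto
  then show "x - y \<in> J" by simp
next
  assume d: "x - y \<in> J"
  have "(+) x ` J \<subseteq> (+) y ` J"
  proof
    fix t assume "t \<in> (+) x ` J"
    then obtain j where j: "j \<in> J" "t = x + j" by auto
    then have "t = y + ((x - y) + j)" by simp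
    moreover have "(x - y) + j \<in> J" using id_add[OF assms d j(1)] .
    ultimately show "t \<in> (+) y ` J" by blast
  qed
  moreover have "(+) y ` J \<subseteq> (+) x ` J"
  proof
    fix t assume "t \<in> (+) y ` J"
    then obtain j where j: "j \<in> J" "t = y + j" by auto
    then have "t = x + (j - (x - y))" by simp
    moreover have "j - (x - y) \<in> J" using id_diff[OF assms j(1) d] .
    ultimately show "t \<in> (+) x ` J" by blast
  qed
  ultimately show "(+) x ` J = (+) y ` J" by blast
qed

lemma poly_const:
  assumes J: "ideal_of J R" and R: "subring_C R" and x: "x \<in> J" "x \<noteq> 0"
  shows "\<forall>z. (\<Sum>i\<le>N. of_int (z i) * x ^ i) = 0 \<longrightarrow> (\<exists>i\<le>N. z i \<noteq> 0) \<longrightarrow> (\<exists>c::int. c \<noteq> 0 \<and> of_int c \<in> J)"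
proof (induction N)
  case 0
  then show ?case by auto
next
  case (Suc N)
  show ?case
  proof (intro allI impI)
    fix z :: "nat \<Rightarrow> int"
    assume s: "(\<Sum>i\<le>Suc N. of_int (z i) * x ^ i) = 0" and nz: "\<exists>i\<le>Suc N. z i \<noteq> 0"
    define W where "W = (\<Sum>i\<le>N. of_int (z (Suc i)) * x ^ i)"
    have xR: "x \<in> R" using x J id_sub by blast
    have WR: "W \<in> R" unfolding W_def using sr_sum[OF R, of "Suc N" "\<lambda>i. of_int (z (Suc i)) * x ^ i"]
      by (simp add: lessThan_Suc_atMost sr_mult[OF R] sr_of_int[OF R] sr_pow[OF R xR])
    have "(\<Sum>i\<le>Suc N. of_int (z i) * x ^ i) = of_int (z 0) + x * W"
      unfolding W_def sum.atMost_Suc_shift by (simp add: sum_distrib_left algebra_simps)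
    then have e: "of_int (z 0) + x * W = 0" using s by simp
    show "\<exists>c::int. c \<noteq> 0 \<and> of_int c \<in> J"
    proof (cases "z 0 = 0")
      case False
      have "of_int (z 0) = - (W * x)" using e by (simp add: algebra_simps eq_neg_iff_add_eq_0)
      moreover have "- (W * x) \<in> J" using id_neg[OF J id_mult[OF J WR x(1)]] .
      ultimately show ?thesis using False by metis
    next
      case True
      then have "W = 0" using e x(2) by simp
      moreover obtain i where "i \<le> Suc N" "z i \<noteq> 0" using nz by blast
      moreover then obtain i' where "i = Suc i'" "i' \<le> N" using True by (cases i) auto
      ultimately have "(\<Sum>i\<le>N. of_int (z (Suc i)) * x ^ i) = 0" "\<exists>i\<le>N. z (Suc i) \<noteq> 0"
        unfolding W_def by auto
      with Suc.IH[rule_format, of "\<lambda>i. z (Suc i)"] show ?thesis by blast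
    qed
  qed
qed

lemma ideal_has_nat:
  assumes J: "ideal_of J R" "J \<noteq> {0}" and R: "subring_C R" and RB: "R \<subseteq> QV.span B" and B: "finite B"
  shows "\<exists>a::nat. a > 0 \<and> of_nat a \<in> J"
proof -
  obtain x where x: "x \<in> J" "x \<noteq> 0" using J id_0 by blast
  have xR: "x \<in> R" using x J id_sub by blast
  have "\<forall>i\<le>card B. x ^ i \<in> QV.span B" using sr_pow[OF R xR] RB by blast
  then obtain z where "(\<Sum>i\<le>card B. of_int (z i) * x ^ i) = 0" "\<exists>i\<le>card B. z i \<noteq> 0"
    using int_dep[OF B, of "card B" "\<lambda>i. x ^ i"] by blast
  then obtain c :: int where c: "c \<noteq> 0" "of_int c \<in> J" using poly_const[OF J(1) R x] by blast
  have "of_int c * of_int c \<in> J" using id_mult[OF J(1) sr_of_int[OF R] c(2)] .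
  moreover have "(of_int c * of_int c :: complex) = of_nat (nat (c * c))" by simp
  moreover have "c * c > 0" using c(1) by (metis mult_neg_neg mult_pos_pos linorder_neq_iff)
  then have "nat (c * c) > 0" by simp
  ultimately show ?thesis by metis
qed

lemma ipE: "z \<in> ideal_prod P I \<Longrightarrow> (\<And>(n::nat) f g. \<forall>i<n. f i \<in> P \<and> g i \<in> I \<Longrightarrow> z = (\<Sum>i<n. f i * g i) \<Longrightarrow> thesis) \<Longrightarrow> thesis"
  unfolding ideal_prod_def mem_Collect_eq by blast

lemma ipD: "z \<in> ideal_prod P I \<Longrightarrow> \<exists>(n::nat) f g. (\<forall>i<n. f i \<in> P \<and> g i \<in> I) \<and> z = (\<Sum>i<n. f i * g i)"
  unfolding ideal_prod_def by simp

lemma ipI: "\<forall>i<(n::nat). f i \<in> P \<and> g i \<in> I \<Longrightarrow> z = (\<Sum>i<n. f i * g i) \<Longrightarrow> z \<in> ideal_prod P I"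
  unfolding ideal_prod_def by blast

lemma ip_single: "p \<in> P \<Longrightarrow> y \<in> I \<Longrightarrow> p * y \<in> ideal_prod P I"
  unfolding ideal_prod_def by (rule CollectI, rule exI[of _ 1], rule exI[of _ "\<lambda>_. p"], rule exI[of _ "\<lambda>_. y"]) auto

lemma ip_0: "0 \<in> ideal_prod P I"
  unfolding ideal_prod_def by (rule CollectI, rule exI[of _ 0]) auto

lemma ip_add_single:
  assumes "z \<in> ideal_prod P I" "p \<in> P" "y \<in> I"
  shows "z + p * y \<in> ideal_prod P I"
proof -
  obtain n :: nat and f g where fg: "\<forall>i<n. f i \<in> P \<and> g i \<in> I" "z = (\<Sum>i<n. f i * g i)"
    using assms(1) by (blast dest: ipD)
  have "z + p * y = (\<Sum>i<Suc n. (f(n := p)) i * (g(n := y)) i)"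
    using fg(2) by (simp add: lessThan_Suc)
  moreover have "\<forall>i<Suc n. (f(n := p)) i \<in> P \<and> (g(n := y)) i \<in> I" using fg(1) assms by auto
  ultimately show ?thesis unfolding ideal_prod_def by blast
qed

lemma ip_add:
  assumes "z \<in> ideal_prod P I" "w \<in> ideal_prod P I"
  shows "z + w \<in> ideal_prod P I"
proof -
  obtain n :: nat and f g where fg: "\<forall>i<n. f i \<in> P \<and> g i \<in> I" "w = (\<Sum>i<n. f i * g i)"
    using assms(2) by (blast dest: ipD)
  have "\<forall>m\<le>n. z + (\<Sum>i<m. f i * g i) \<in> ideal_prod P I"
  proof (intro allI impI)
    fix m assume "m \<le> n"
    then show "z + (\<Sum>i<m. f i * g i) \<in> ideal_prod P I"
    proof (induction m)
      case 0
      then show ?case using assms(1) by simp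
    next
      case (Suc m)
      then have "z + (\<Sum>i<m. f i * g i) + f m * g m \<in> ideal_prod P I"
        using ip_add_single fg(1) by simp
      then show ?case by (simp add: add.assoc)
    qed
  qed
  then show ?thesis using fg(2) by simp
qed

lemma ip_rmul:
  assumes P: "ideal_of P R" and r: "r \<in> R" and z: "z \<in> ideal_prod P I"
  shows "r * z \<in> ideal_prod P I"
proof -
  obtain n :: nat and f g where fg: "\<forall>i<n. f i \<in> P \<and> g i \<in> I" "z = (\<Sum>i<n. f i * g i)"
    using z by (blast dest: ipD)
  have "r * z = (\<Sum>i<n. (r * f i) * g i)" using fg(2) by (simp add: sum_distrib_left mult.assoc)
  moreover have "\<forall>i<n. r * f i \<in> P \<and> g i \<in> I" using fg(1) id_mult[OF P r] by auto
  ultimately show ?thesis by (intro ipI[where f="\<lambda>i. r * f i"])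
qed

lemma ip_sub:
  assumes P: "ideal_of P R" and I: "ideal_of I R"
  shows "ideal_prod P I \<subseteq> I"
proof
  fix z assume "z \<in> ideal_prod P I"
  then obtain n :: nat and f g where fg: "\<forall>i<n. f i \<in> P \<and> g i \<in> I" "z = (\<Sum>i<n. f i * g i)"
    by (blast dest: ipD)
  have "\<forall>i<n. f i * g i \<in> I" using fg(1) id_mult[OF I] id_sub[OF P] by blast
  then show "z \<in> I" using id_sum[OF I] fg(2) by simp
qed

lemma ip_ideal:
  assumes R: "subring_C R" and P: "ideal_of P R" and I: "ideal_of I R"
  shows "ideal_of (ideal_prod P I) R"
proof -
  have neg: "- z \<in> ideal_prod P I" if "z \<in> ideal_prod P I" for z
  proof -
    have "-1 \<in> R" using sr_of_int[OF R, of "-1"] by simp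
    then show ?thesis using ip_rmul[OF P _ that, of "-1"] by simp
  qed
  have "x - y \<in> ideal_prod P I" if "x \<in> ideal_prod P I" "y \<in> ideal_prod P I" for x y
    using ip_add[OF that(1) neg[OF that(2)]] by simp
  moreover have "ideal_prod P I \<subseteq> R" using ip_sub[OF P I] id_sub[OF I] by (rule subset_trans)
  ultimately show ?thesis unfolding ideal_of_def
    using ip_0 ip_add ip_rmul[OF P] by simp
qed



lemma cosets_finite:
  fixes a :: nat
  assumes R: "subring_C R" and RB: "R \<subseteq> QV.span B" and B: "finite B"
    and J: "ideal_of J R" and a: "a > 0" "of_nat a \<in> J"
  shows "finite ((\<lambda>x. (+) x ` J) ` R)"
proof (rule ccontr)
  let ?C = "(\<lambda>x. (+) x ` J) ` R"
  assume inf: "infinite ?C"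
  then obtain C' where C': "C' \<subseteq> ?C" "finite C'" "card C' = Suc (a ^ card B)"
    using infinite_arbitrarily_large by blast
  define rep where "rep = (\<lambda>D. SOME y. y \<in> R \<and> D = (+) y ` J)"
  have rep: "rep D \<in> R \<and> D = (+) (rep D) ` J" if "D \<in> ?C" for D
  proof -
    have "\<exists>y. y \<in> R \<and> D = (+) y ` J" using that by auto
    then show ?thesis unfolding rep_def by (rule someI_ex)
  qed
  have inj: "inj_on rep C'"
  proof (rule inj_onI)
    fix D D' assume "D \<in> C'" "D' \<in> C'" "rep D = rep D'"
    then show "D = D'" using rep C'(1) by (metis subsetD)
  qed
  define Y where "Y = rep ` C'"
  have Y: "Y \<subseteq> R" "finite Y" "card Y > a ^ card B"
    using rep C' inj unfolding Y_def by (auto simp: card_image)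
  obtain y y' r where yy: "y \<in> Y" "y' \<in> Y" "y \<noteq> y'" "r \<in> R" "y - y' = of_nat a * r"
    using claimF[OF R RB B Y a(1)] by blast
  have "y - y' \<in> J" using yy id_mult2[OF J yy(4) a(2)] by simp
  then have eq: "(+) y ` J = (+) y' ` J" using coset_eq[OF J] by blast
  obtain D D' where "D \<in> C'" "D' \<in> C'" "y = rep D" "y' = rep D'" using yy Y_def by auto
  then have "D = D'" using rep C'(1) eq by (metis subsetD)
  then show False using yy \<open>y = rep D\<close> \<open>y' = rep D'\<close> by simp
qed

lemma max_cancel:
  assumes R: "subring_C R" and P: "maximal_ideal_of P R" and I: "ideal_of I R"
    and u: "u \<in> R" "u \<notin> P" and x: "x \<in> I" and ux: "u * x \<in> ideal_prod P I"
  shows "x \<in> ideal_prod P I"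
proof -
  have Pi: "ideal_of P R" using P unfolding maximal_ideal_of_def by blast
  define J where "J = {p + t * u | p t. p \<in> P \<and> t \<in> R}"
  have PR: "P \<subseteq> R" using id_sub[OF Pi] .
  have "ideal_of J R" unfolding ideal_of_def
  proof (intro conjI ballI)
    show "J \<subseteq> R" unfolding J_def using PR u by (auto intro!: sr_add[OF R] sr_mult[OF R])
    show "0 \<in> J" unfolding J_def using id_0[OF Pi] sr_0[OF R] by force
  next
    fix x y assume "x \<in> J" "y \<in> J"
    then obtain p t p' t' where "p \<in> P" "t \<in> R" "p' \<in> P" "t' \<in> R" "x = p + t * u" "y = p' + t' * u"
      unfolding J_def by blast
    moreover have "x + y = (p + p') + (t + t') * u" "x - y = (p - p') + (t - t') * u"
      using calculation by (simp_all add: algebra_simps)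
    ultimately show "x + y \<in> J" unfolding J_def
      using id_add[OF Pi] sr_add[OF R] by blast
  next
    fix x y assume "x \<in> J" "y \<in> J"
    then obtain p t p' t' where "p \<in> P" "t \<in> R" "p' \<in> P" "t' \<in> R" "x = p + t * u" "y = p' + t' * u"
      unfolding J_def by blast
    moreover have "x - y = (p - p') + (t - t') * u"
      using calculation by (simp_all add: algebra_simps)
    ultimately show "x - y \<in> J" unfolding J_def
      using id_diff[OF Pi] sr_diff[OF R] by blast
  next
    fix r x assume "r \<in> R" "x \<in> J"
    then obtain p t where "p \<in> P" "t \<in> R" "x = p + t * u" unfolding J_def by blast
    moreover have "r * x = r * p + (r * t) * u" using calculation by (simp add: algebra_simps)
    ultimately show "r * x \<in> J" unfolding J_def
      using id_mult[OF Pi \<open>r \<in> R\<close>] sr_mult[OF R \<open>r \<in> R\<close>] by blast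
  qed
  moreover have "P \<subseteq> J" unfolding J_def using sr_0[OF R] by force
  moreover have "u \<in> J" unfolding J_def using id_0[OF Pi] sr_1[OF R] by force
  ultimately have "J = R" using P u(2) unfolding maximal_ideal_of_def by blast
  then have "1 \<in> J" using sr_1[OF R] by simp
  then obtain p t where pt: "p \<in> P" "t \<in> R" "1 = p + t * u" unfolding J_def by blast
  have "x = p * x + t * (u * x)" using pt(3) by (metis mult.assoc mult_1 distrib_right)
  moreover have "p * x \<in> ideal_prod P I" using ip_single pt(1) x .
  moreover have "t * (u * x) \<in> ideal_prod P I" using ip_rmul[OF Pi pt(2) ux] .
  ultimately show ?thesis using ip_add by metis
qed

lemma nak_core:
  fixes Q :: "complex set" and k :: nat
  assumes cl: "\<forall>x\<in>Q. \<forall>y\<in>Q. x + y \<in> Q \<and> x * y \<in> Q"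
    and inv: "\<forall>q\<in>Q. 1 - q \<noteq> 0 \<and> (\<forall>q'\<in>Q. q' / (1 - q) \<in> Q)"
  shows "(\<forall>j<k. \<exists>A. (\<forall>i<k. A i \<in> Q) \<and> g j = (\<Sum>i<k. A i * g i)) \<Longrightarrow> \<forall>j<k. g j = 0"
proof (induction k arbitrary: g)
  case 0
  then show ?case by simp
next
  case (Suc k)
  have "\<forall>j. \<exists>A. j < Suc k \<longrightarrow> (\<forall>i<Suc k. A i \<in> Q) \<and> g j = (\<Sum>i<Suc k. A i * g i)"
    using Suc.prems by blast
  then obtain AA where AA: "\<And>j. j < Suc k \<Longrightarrow> (\<forall>i<Suc k. AA j i \<in> Q) \<and> g j = (\<Sum>i<Suc k. AA j i * g i)"
    by metis
  define a where "a = AA k"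
  have aQ: "\<forall>i<Suc k. a i \<in> Q" using AA[of k] unfolding a_def by simp
  have ga: "g k = (\<Sum>i<k. a i * g i) + a k * g k" using AA[of k] unfolding a_def by simp
  have nz: "1 - a k \<noteq> 0" using inv aQ by simp
  have gk: "g k = (\<Sum>i<k. (a i / (1 - a k)) * g i)"
  proof -
    have "(1 - a k) * g k = (\<Sum>i<k. a i * g i)" using ga by (simp add: algebra_simps)
    then have "g k = (\<Sum>i<k. a i * g i) / (1 - a k)" using nz by (simp add: field_simps)
    then show ?thesis by (simp add: sum_divide_distrib)
  qed
  have "\<forall>j<k. g j = 0"
  proof (rule Suc.IH, intro allI impI)
    fix j assume j: "j < k"
    define A where "A = (\<lambda>i. AA j i + AA j k * (a i / (1 - a k)))"
    have AjQ: "\<forall>i<Suc k. AA j i \<in> Q" using AA[of j] j by simp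
    have "\<forall>i<k. A i \<in> Q"
    proof (intro allI impI)
      fix i assume "i < k"
      then have q1: "a i / (1 - a k) \<in> Q" using inv aQ by simp
      have h1: "AA j i \<in> Q" "AA j k \<in> Q" using AjQ \<open>i < k\<close> by auto
      have "AA j k * (a i / (1 - a k)) \<in> Q" using cl h1(2) q1 by blast
      then show "A i \<in> Q" unfolding A_def using cl h1(1) by blast
    qed
    moreover have "g j = (\<Sum>i<k. A i * g i)"
    proof -
      have "g j = (\<Sum>i<k. AA j i * g i) + AA j k * g k" using AA[of j] j by simp
      also have "\<dots> = (\<Sum>i<k. AA j i * g i) + (\<Sum>i<k. AA j k * ((a i / (1 - a k)) * g i))"
        by (subst gk) (simp add: sum_distrib_left)
      also have "\<dots> = (\<Sum>i<k. A i * g i)" unfolding A_def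
        by (simp add: sum.distrib[symmetric] algebra_simps)
      finally show ?thesis .
    qed
    ultimately show "\<exists>A. (\<forall>i<k. A i \<in> Q) \<and> g j = (\<Sum>i<k. A i * g i)" by blast
  qed
  moreover then have "g k = 0" using gk by simp
  ultimately show ?case using less_Suc_eq by auto
qed



lemma loc_Q:
  assumes Pi: "ideal_of P R" and R: "subring_C R" and one: "1 \<notin> P"
  defines "Q \<equiv> {r / (1 - p) | r p. r \<in> P \<and> p \<in> P}"
  shows "P \<subseteq> Q" "\<forall>x\<in>Q. \<forall>y\<in>Q. x + y \<in> Q \<and> x * y \<in> Q"
    "\<forall>q\<in>Q. 1 - q \<noteq> 0 \<and> (\<forall>q'\<in>Q. q' / (1 - q) \<in> Q)"
proof -
  have PR: "P \<subseteq> R" using id_sub[OF Pi] .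
  have nz: "1 - p \<noteq> 0" if "p \<in> P" for p using that one by auto
  have mP: "x * y \<in> P" if "x \<in> P" "y \<in> P" for x y using id_mult2[OF Pi _ that(1)] PR that(2) by blast
  show "P \<subseteq> Q"
  proof
    fix r assume "r \<in> P"
    moreover have "r = r / (1 - 0)" by simp
    ultimately show "r \<in> Q" unfolding Q_def using id_0[OF Pi] by blast
  qed
  show "\<forall>x\<in>Q. \<forall>y\<in>Q. x + y \<in> Q \<and> x * y \<in> Q"
  proof (intro ballI conjI)
    fix x y assume "x \<in> Q" "y \<in> Q"
    then obtain r p r' p' where rp: "r \<in> P" "p \<in> P" "r' \<in> P" "p' \<in> P" "x = r / (1 - p)" "y = r' / (1 - p')"
      unfolding Q_def by blast
    have d: "(1 - p) * (1 - p') = 1 - (p + p' - p * p')" by (simp add: algebra_simps)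
    have dP: "p + p' - p * p' \<in> P" using id_diff[OF Pi id_add[OF Pi rp(2,4)] mP[OF rp(2,4)]] .
    have "x + y = (r * (1 - p') + r' * (1 - p)) / ((1 - p) * (1 - p'))"
      unfolding rp(5,6) by (rule add_frac_eq) (use nz rp in auto)
    also have "\<dots> = ((r + r') - (r * p' + r' * p)) / (1 - (p + p' - p * p'))"
      by (simp add: d algebra_simps)
    finally have "x + y = ((r + r') - (r * p' + r' * p)) / (1 - (p + p' - p * p'))" .
    moreover have "(r + r') - (r * p' + r' * p) \<in> P"
      using id_diff[OF Pi id_add[OF Pi rp(1,3)] id_add[OF Pi mP[OF rp(1,4)] mP[OF rp(3,2)]]] .
    ultimately show "x + y \<in> Q" unfolding Q_def using dP by blast
    have "x * y = (r * r') / ((1 - p) * (1 - p'))" using rp nz by simp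
    also have "\<dots> = (r * r') / (1 - (p + p' - p * p'))" by (simp add: d)
    finally have "x * y = (r * r') / (1 - (p + p' - p * p'))" .
    then show "x * y \<in> Q" unfolding Q_def using dP mP[OF rp(1,3)] by blast
  qed
  show "\<forall>q\<in>Q. 1 - q \<noteq> 0 \<and> (\<forall>q'\<in>Q. q' / (1 - q) \<in> Q)"
  proof (intro ballI conjI)
    fix q assume "q \<in> Q"
    then obtain r p where rp: "r \<in> P" "p \<in> P" "q = r / (1 - p)" unfolding Q_def by blast
    have prP: "p + r \<in> P" using id_add[OF Pi rp(2,1)] .
    have e1: "1 - q = (1 - (p + r)) / (1 - p)" using rp nz by (simp add: field_simps)
    then show "1 - q \<noteq> 0" using nz[OF prP] nz[OF rp(2)] by simp
    fix q' assume "q' \<in> Q"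
    then obtain r' p' where rp': "r' \<in> P" "p' \<in> P" "q' = r' / (1 - p')" unfolding Q_def by blast
    have d: "(1 - p') * (1 - (p + r)) = 1 - (p' + (p + r) - p' * (p + r))" by (simp add: algebra_simps)
    have dP: "p' + (p + r) - p' * (p + r) \<in> P" using id_diff[OF Pi id_add[OF Pi rp'(2) prP] mP[OF rp'(2) prP]] .
    have "q' / (1 - q) = (r' * (1 - p)) / ((1 - p') * (1 - (p + r)))"
      unfolding e1 rp'(3) by (rule divide_divide_times_eq)
    also have "\<dots> = (r' - r' * p) / (1 - (p' + (p + r) - p' * (p + r)))" by (simp add: d algebra_simps)
    finally have "q' / (1 - q) = (r' - r' * p) / (1 - (p' + (p + r) - p' * (p + r)))" .
    moreover have "r' - r' * p \<in> P" using id_diff[OF Pi rp'(1) mP[OF rp'(1) rp(2)]] .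
    ultimately show "q' / (1 - q) \<in> Q" unfolding Q_def using dP by blast
  qed
qed



lemma ideal_fg:
  fixes c :: nat
  assumes R: "subring_C R" and RB: "R \<subseteq> QV.span B" and B: "finite B"
    and I: "ideal_of I R" and c: "c > 0" "of_nat c \<in> I"
  shows "\<exists>(k::nat) gen. (\<forall>i<k. gen i \<in> I) \<and> (\<forall>y\<in>I. \<exists>r. (\<forall>i<k. r i \<in> R) \<and> y = (\<Sum>i<k. r i * gen i))"
proof -
  define cR where "cR = {of_nat c * r | r. r \<in> R}"
  have cRi: "ideal_of cR R" unfolding ideal_of_def
  proof (intro conjI ballI)
    show "cR \<subseteq> R" unfolding cR_def using sr_mult[OF R sr_of_nat[OF R]] by blast
    show "0 \<in> cR" unfolding cR_def using sr_0[OF R] by force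
  next
    fix x y assume "x \<in> cR" "y \<in> cR"
    then obtain r r' where "r \<in> R" "r' \<in> R" "x = of_nat c * r" "y = of_nat c * r'" unfolding cR_def by blast
    moreover have "x + y = of_nat c * (r + r')" using calculation by (simp add: algebra_simps)
    ultimately show "x + y \<in> cR" unfolding cR_def using sr_add[OF R] by blast
  next
    fix x y assume "x \<in> cR" "y \<in> cR"
    then obtain r r' where "r \<in> R" "r' \<in> R" "x = of_nat c * r" "y = of_nat c * r'" unfolding cR_def by blast
    moreover have "x - y = of_nat c * (r - r')" using calculation by (simp add: algebra_simps)
    ultimately show "x - y \<in> cR" unfolding cR_def using sr_diff[OF R] by blast
  next
    fix t x assume "t \<in> R" "x \<in> cR"
    then obtain r where "r \<in> R" "x = of_nat c * r" unfolding cR_def by blast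
    moreover have "t * x = of_nat c * (t * r)" using calculation by (simp add: algebra_simps)
    ultimately show "t * x \<in> cR" unfolding cR_def using sr_mult[OF R \<open>t \<in> R\<close>] by blast
  qed
  have ccR: "of_nat c \<in> cR" unfolding cR_def using sr_1[OF R] by force
  have fin: "finite ((\<lambda>x. (+) x ` cR) ` R)" by (rule cosets_finite[OF R RB B cRi c(1) ccR])
  have IR: "I \<subseteq> R" using id_sub[OF I] .
  define CI where "CI = (\<lambda>x. (+) x ` cR) ` I"
  have finCI: "finite CI" unfolding CI_def using fin IR by (meson finite_subset image_mono)
  define rep where "rep = (\<lambda>D. SOME g. g \<in> I \<and> D = (+) g ` cR)"
  have rep: "rep D \<in> I \<and> D = (+) (rep D) ` cR" if "D \<in> CI" for D
  proof -
    have "\<exists>g. g \<in> I \<and> D = (+) g ` cR" using that unfolding CI_def by auto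
    then show ?thesis unfolding rep_def by (rule someI_ex)
  qed
  define G where "G = insert (of_nat c) (rep ` CI)"
  have finG: "finite G" unfolding G_def using finCI by simp
  have GI: "G \<subseteq> I" unfolding G_def using rep c(2) by auto
  obtain gen where gen: "bij_betw gen {0..<card G} G" using ex_bij_betw_nat_finite[OF finG] by blast
  define k where "k = card G"
  have genI: "\<forall>i<k. gen i \<in> I" using gen GI unfolding k_def bij_betw_def by auto
  have span: "\<exists>r. (\<forall>i<k. r i \<in> R) \<and> y = (\<Sum>i<k. r i * gen i)" if "y \<in> I" for y
  proof -
    define D where "D = (+) y ` cR"
    have D: "D \<in> CI" unfolding D_def CI_def using that by blast
    define g0 where "g0 = rep D"
    have g0: "g0 \<in> I" "(+) g0 ` cR = (+) y ` cR" using rep[OF D] unfolding g0_def D_def by auto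
    then have "y - g0 \<in> cR" using coset_eq[OF cRi] by blast
    then obtain t where t: "t \<in> R" "y - g0 = of_nat c * t" unfolding cR_def by blast
    have "g0 \<in> G" "of_nat c \<in> G" unfolding G_def g0_def using D by auto
    then obtain ia ic where ia: "ia < k" "gen ia = g0" and ic: "ic < k" "gen ic = of_nat c"
      using gen unfolding bij_betw_def k_def by (metis atLeastLessThan_iff imageE)
    define r where "r = (\<lambda>i. (if i = ia then 1 else 0) + (if i = ic then t else 0))"
    have rR: "\<forall>i<k. r i \<in> R" unfolding r_def using t(1) sr_0[OF R] sr_1[OF R] sr_add[OF R] by auto
    have "(\<Sum>i<k. r i * gen i) = (\<Sum>i<k. (if i = ia then gen i else 0) + (if i = ic then t * gen i else 0))"
      by (rule sum.cong) (auto simp: r_def algebra_simps)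
    also have "\<dots> = (\<Sum>i<k. (if i = ia then gen i else 0)) + (\<Sum>i<k. (if i = ic then t * gen i else 0))"
      by (rule sum.distrib)
    also have "\<dots> = g0 + t * of_nat c" using ia ic by simp
    also have "\<dots> = y" using t(2) by (simp add: algebra_simps)
    finally show ?thesis using rR by metis
  qed
  show ?thesis using genI span by blast
qed

lemma PI_ne:
  assumes R: "subring_C R" and P: "maximal_ideal_of P R" and I: "ideal_of I R" "I \<noteq> {0}"
    and gen: "\<forall>i<(k::nat). gen i \<in> I" "\<forall>y\<in>I. \<exists>r. (\<forall>i<k. r i \<in> R) \<and> y = (\<Sum>i<k. r i * gen i)"
  shows "ideal_prod P I \<noteq> I"
proof
  assume eq: "ideal_prod P I = I"
  have Pi: "ideal_of P R" using P unfolding maximal_ideal_of_def by blast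
  have one: "1 \<notin> P"
  proof
    assume "1 \<in> P"
    then have "R \<subseteq> P" using id_mult2[OF Pi _ \<open>1 \<in> P\<close>] by force
    then show False using P id_sub[OF Pi] unfolding maximal_ideal_of_def by blast
  qed
  define Q where "Q = {r / (1 - p) | r p. r \<in> P \<and> p \<in> P}"
  have Q: "P \<subseteq> Q" "\<forall>x\<in>Q. \<forall>y\<in>Q. x + y \<in> Q \<and> x * y \<in> Q"
    "\<forall>q\<in>Q. 1 - q \<noteq> 0 \<and> (\<forall>q'\<in>Q. q' / (1 - q) \<in> Q)"
    using loc_Q[OF Pi R one] unfolding Q_def by blast+
  have "\<forall>j<k. \<exists>A. (\<forall>i<k. A i \<in> Q) \<and> gen j = (\<Sum>i<k. A i * gen i)"
  proof (intro allI impI)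
    fix j assume "j < k"
    then have "gen j \<in> ideal_prod P I" using gen(1) eq by simp
    then obtain n :: nat and f h where fh: "\<forall>t<n. f t \<in> P \<and> h t \<in> I" "gen j = (\<Sum>t<n. f t * h t)"
      by (blast dest: ipD)
    have "\<forall>t. \<exists>r. t < n \<longrightarrow> (\<forall>i<k. r i \<in> R) \<and> h t = (\<Sum>i<k. r i * gen i)"
      using fh(1) gen(2) by blast
    then obtain rr where rr: "\<And>t. t < n \<Longrightarrow> (\<forall>i<k. rr t i \<in> R) \<and> h t = (\<Sum>i<k. rr t i * gen i)"
      by metis
    define A where "A = (\<lambda>i. \<Sum>t<n. f t * rr t i)"
    have "gen j = (\<Sum>t<n. f t * (\<Sum>i<k. rr t i * gen i))" using fh(2) rr by simp
    also have "\<dots> = (\<Sum>t<n. \<Sum>i<k. f t * rr t i * gen i)" by (simp add: sum_distrib_left mult.assoc)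
    also have "\<dots> = (\<Sum>i<k. \<Sum>t<n. f t * rr t i * gen i)" by (rule sum.swap)
    also have "\<dots> = (\<Sum>i<k. A i * gen i)" unfolding A_def by (simp add: sum_distrib_right)
    finally have "gen j = (\<Sum>i<k. A i * gen i)" .
    moreover have "\<forall>i<k. A i \<in> Q"
    proof (intro allI impI)
      fix i assume "i < k"
      have "\<forall>t<n. f t * rr t i \<in> P" using fh(1) rr \<open>i < k\<close> id_mult2[OF Pi] by blast
      then have "A i \<in> P" unfolding A_def by (rule id_sum[OF Pi])
      then show "A i \<in> Q" using Q(1) by blast
    qed
    ultimately show "\<exists>A. (\<forall>i<k. A i \<in> Q) \<and> gen j = (\<Sum>i<k. A i * gen i)" by blast
  qed
  then have z: "\<forall>j<k. gen j = 0" using nak_core[OF Q(2) Q(3)] by blast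
  have "I \<subseteq> {0}"
  proof
    fix y assume "y \<in> I"
    then obtain r where "y = (\<Sum>i<k. r i * gen i)" using gen(2) by blast
    then show "y \<in> {0}" using z by simp
  qed
  then show False using I id_0[OF I(1)] by blast
qed



theorem proposition2p7:
  fixes R I P :: "complex set"
  assumes "number_ring R"
    and "ideal_of I R" and "I \<noteq> {0}"
    and "maximal_ideal_of P R"
  shows "ideal_norm R (ideal_prod P I) \<ge> ideal_norm R I * ideal_norm R P"
proof -
  have R: "subring_C R" using assms(1) unfolding number_ring_def by blast
  obtain K where K: "number_field K" "R \<subseteq> K" using assms(1) unfolding number_ring_def by blast
  obtain B where B: "finite B" "K = {\<Sum>b\<in>B. of_rat (c b) * b | c. True}"
    using K(1) unfolding number_field_def by blast
  have "K = QV.span B" unfolding B(2) QV.span_finite[OF B(1)] by auto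
  then have RB: "R \<subseteq> QV.span B" using K(2) by simp
  have I: "ideal_of I R" using assms(2) .
  have Pm: "maximal_ideal_of P R" using assms(4) .
  have Pi: "ideal_of P R" using Pm unfolding maximal_ideal_of_def by blast
  define cos where "cos = (\<lambda>J x. (+) x ` (J::complex set))"
  have norm_def': "ideal_norm R J = card (cos J ` R)" for J unfolding ideal_norm_def cos_def ..
  show ?thesis
  proof (cases "P = {0}")
    case True
    have "range (of_nat :: nat \<Rightarrow> complex) \<subseteq> R" using sr_of_nat[OF R] by blast
    moreover have "infinite (range (of_nat :: nat \<Rightarrow> complex))"
      using finite_imageD[of "of_nat :: nat \<Rightarrow> complex" UNIV] inj_of_nat infinite_UNIV_nat by blast
    ultimately have infR: "infinite R" using infinite_super by blast
    have "cos P ` R = (\<lambda>x. {x}) ` R" unfolding cos_def True by auto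
    moreover have "inj_on (\<lambda>x. {x}) R" by (auto intro: inj_onI)
    ultimately have "card (cos P ` R) = 0" using infR by (simp add: card_image)
    then show ?thesis unfolding norm_def' by simp
  next
    case False
    obtain d :: nat where d: "d > 0" "of_nat d \<in> P" using ideal_has_nat[OF Pi False R RB B(1)] by blast
    obtain c :: nat where c: "c > 0" "of_nat c \<in> I" using ideal_has_nat[OF I assms(3) R RB B(1)] by blast
    define PI where "PI = ideal_prod P I"
    have PIi: "ideal_of PI R" unfolding PI_def by (rule ip_ideal[OF R Pi I])
    have PIsub: "PI \<subseteq> I" unfolding PI_def by (rule ip_sub[OF Pi I])
    have "of_nat d * of_nat c \<in> PI" unfolding PI_def by (rule ip_single[OF d(2) c(2)])
    then have cdPI: "of_nat (d * c) \<in> PI" by simp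
    have finPI: "finite (cos PI ` R)" unfolding cos_def
      by (rule cosets_finite[OF R RB B(1) PIi _ cdPI]) (use c d in simp)
    have finI: "finite (cos I ` R)" unfolding cos_def by (rule cosets_finite[OF R RB B(1) I c])
    have finP: "finite (cos P ` R)" unfolding cos_def by (rule cosets_finite[OF R RB B(1) Pi d])
    obtain k :: nat and gen where gen: "\<forall>i<k. gen i \<in> I" "\<forall>y\<in>I. \<exists>r. (\<forall>i<k. r i \<in> R) \<and> y = (\<Sum>i<k. r i * gen i)"
      using ideal_fg[OF R RB B(1) I c] by blast
    have "PI \<noteq> I" unfolding PI_def by (rule PI_ne[OF R Pm I assms(3) gen])
    then obtain x0 where x0: "x0 \<in> I" "x0 \<notin> PI" using PIsub by blast
    define repI where "repI = (\<lambda>C. SOME r. r \<in> R \<and> C = cos I r)"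
    define repP where "repP = (\<lambda>C. SOME r. r \<in> R \<and> C = cos P r)"
    have repI: "repI C \<in> R \<and> C = cos I (repI C)" if "C \<in> cos I ` R" for C
    proof -
      have "\<exists>r. r \<in> R \<and> C = cos I r" using that by auto
      then show ?thesis unfolding repI_def by (rule someI_ex)
    qed
    have repP: "repP C \<in> R \<and> C = cos P (repP C)" if "C \<in> cos P ` R" for C
    proof -
      have "\<exists>r. r \<in> R \<and> C = cos P r" using that by auto
      then show ?thesis unfolding repP_def by (rule someI_ex)
    qed
    have x0R: "x0 \<in> R" using x0(1) id_sub[OF I] by blast
    define F where "F = (\<lambda>(C, D). cos PI (repI C + repP D * x0))"
    have img: "F ` (cos I ` R \<times> cos P ` R) \<subseteq> cos PI ` R"
    proof
      fix z assume "z \<in> F ` (cos I ` R \<times> cos P ` R)"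
      then obtain C D where CD: "C \<in> cos I ` R" "D \<in> cos P ` R" "z = F (C, D)" by blast
      have "repI C + repP D * x0 \<in> R" using repI[OF CD(1)] repP[OF CD(2)] x0R
        by (intro sr_add[OF R] sr_mult[OF R]) auto
      then show "z \<in> cos PI ` R" using CD(3) unfolding F_def by auto
    qed
    have inj: "inj_on F (cos I ` R \<times> cos P ` R)"
    proof (rule inj_onI)
      fix p q assume pq: "p \<in> cos I ` R \<times> cos P ` R" "q \<in> cos I ` R \<times> cos P ` R" "F p = F q"
      obtain C D C' D' where pqs: "p = (C, D)" "q = (C', D')" by (cases p, cases q) auto
      have CD: "C \<in> cos I ` R" "D \<in> cos P ` R" "C' \<in> cos I ` R" "D' \<in> cos P ` R"
        using pq(1,2) unfolding pqs by auto
      have eqF: "F (C, D) = F (C', D')" using pq(3) unfolding pqs .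
      have rR: "repI C \<in> R" "repI C' \<in> R" "repP D \<in> R" "repP D' \<in> R"
        using repI CD repP by auto
      have "(repI C + repP D * x0) - (repI C' + repP D' * x0) \<in> PI"
        using eqF coset_eq[OF PIi] unfolding F_def cos_def by simp
      then have diff: "(repI C - repI C') + (repP D - repP D') * x0 \<in> PI"
        by (simp add: algebra_simps)
      have "(repP D - repP D') * x0 \<in> I" using id_mult[OF I sr_diff[OF R rR(3,4)] x0(1)] .
      then have "(repI C - repI C') + (repP D - repP D') * x0 - (repP D - repP D') * x0 \<in> I"
        using id_diff[OF I subsetD[OF PIsub diff]] by blast
      then have "repI C - repI C' \<in> I" by simp
      then have "cos I (repI C) = cos I (repI C')" using coset_eq[OF I] unfolding cos_def by blast
      then have CC: "C = C'" using repI CD by metis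
      then have "(repP D - repP D') * x0 \<in> PI" using diff by simp
      then have "repP D - repP D' \<in> P"
        using max_cancel[OF R Pm I sr_diff[OF R rR(3,4)] _ x0(1)] x0(2) unfolding PI_def by blast
      then have "cos P (repP D) = cos P (repP D')" using coset_eq[OF Pi] unfolding cos_def by blast
      then have "D = D'" using repP CD by metis
      then show "p = q" using CC pqs by simp
    qed
    have "card (cos I ` R \<times> cos P ` R) \<le> card (cos PI ` R)"
      by (rule card_inj_on_le[OF inj img finPI])
    then show ?thesis unfolding norm_def' PI_def[symmetric] by (simp add: card_cartesian_product)
  qed
qed

end
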